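(* The Pansiot pre-antipalindromes of length $3$ are exactly $001$, $011$, $100$, and $110$. Moreover, for every integer $n\geq 1$: (i) the Pansiot pre-antipalindromes of length $4n+1$ are precisely the words of the form $0u0$ or $1u1$, where $u$ is a Pansiot pre-antipalindrome of length $4n-1$; (ii) the Pansiot pre-antipalindromes of length $4n+3$ are precisely the words of the form $0u1$ or $1u0$, where $u$ is a Pansiot pre-antipalindrome of length $4n+1$.
   Context: Words are over the binary alphabet $\{0,1\}$, with letters also read as the integers $0$ and $1$. For a nonempty binary word $u=u_1u_2\cdots u_n$, its Pansiot coding is the binary word $c_1c_2\cdots c_{n-1}$ of length $n-1$ with $c_i=|u_i-u_{i+1}|$ (equivalently $c_i=u_i+u_{i+1}\bmod 2$). A binary word $x=x_1\cdots x_m$ is an anti-palindrome if $x_i\neq x_{m+1-i}$ for every $i\in\{1,\ldots,m\}$. A binary word is a Pansiot pre-antipalindrome if its Pansiot coding is an anti-palindrome. *)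

theory Defs
  imports Main
begin

definition binary_word :: "nat list \<Rightarrow> bool" where
  "binary_word u \<longleftrightarrow> set u \<subseteq> {0, 1}"

definition pansiot :: "nat list \<Rightarrow> nat list" where
  "pansiot u = map (\<lambda>i. if u ! i = u ! (Suc i) then 0 else 1) [0..<length u - 1]"

(* x_i \<noteq> x_{m+1-i} for all i (0-based: x!i \<noteq> x!(m-1-i)) *)
definition anti_palindrome :: "nat list \<Rightarrow> bool" where
  "anti_palindrome x \<longleftrightarrow> (\<forall>i < length x. x ! i \<noteq> x ! (length x - 1 - i))"

definition pansiot_pre_antipal :: "nat list \<Rightarrow> bool" where
  "pansiot_pre_antipal u \<longleftrightarrow> binary_word u \<and> u \<noteq> [] \<and> anti_palindrome (pansiot u)"

end

theory Submission
  imports Defs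
begin

lemma pansiot_Nil[simp]: "pansiot [] = []" by (simp add: pansiot_def)
lemma pansiot_single[simp]: "pansiot [a] = []" by (simp add: pansiot_def)
lemma pansiot_Cons2[simp]:
  "pansiot (a # b # w) = (if a = b then 0 else 1) # pansiot (b # w)"
proof -
  have "[0..<length (a # b # w) - 1] = 0 # map Suc [0..<length (b # w) - 1]"
    by (simp add: upt_conv_Cons map_Suc_upt del: upt_Suc)
  then show ?thesis by (simp add: pansiot_def)
qed

lemma pansiot_snoc:
  "v \<noteq> [] \<Longrightarrow> pansiot (v @ [b]) = pansiot v @ [if last v = b then 0 else 1]"
proof (induction v)
  case Nil then show ?case by simp
next
  case (Cons a v)
  then show ?case by (cases v) auto
qed

lemma anti_pal_alt: "anti_palindrome x \<longleftrightarrow> list_all2 (\<noteq>) x (rev x)"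
  by (auto simp: anti_palindrome_def list_all2_conv_all_nth rev_nth)

lemma anti_pal_wrap:
  "anti_palindrome (x # w @ [y]) \<longleftrightarrow> x \<noteq> y \<and> anti_palindrome w"
  by (auto simp: anti_pal_alt list_all2_append)

lemma pansiot_wrap:
  "v \<noteq> [] \<Longrightarrow> pansiot (a # v @ [b]) =
     (if a = hd v then 0 else 1) # pansiot v @ [if last v = b then 0 else 1]"
proof -
  assume v: "v \<noteq> []"
  have "pansiot (a # v @ [b]) = pansiot (a # v) @ [if last v = b then 0 else 1]"
    using pansiot_snoc[of "a # v" b] v by simp
  moreover have "pansiot (a # v) = (if a = hd v then 0 else 1) # pansiot v"
    using v by (cases v) auto
  ultimately show ?thesis by simp
qed

lemma binary_wrap: "binary_word (a # v @ [b]) \<longleftrightarrow> a \<in> {0,1} \<and> b \<in> {0,1} \<and> binary_word v"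
  by (auto simp: binary_word_def)

lemma ppa_wrap:
  assumes "v \<noteq> []"
  shows "pansiot_pre_antipal (a # v @ [b]) \<longleftrightarrow>
    a \<in> {0,1} \<and> b \<in> {0,1} \<and> pansiot_pre_antipal v \<and>
    (if a = hd v then 0 else 1::nat) \<noteq> (if last v = b then 0 else 1)"
  using assms by (auto simp: pansiot_pre_antipal_def binary_wrap pansiot_wrap anti_pal_wrap)

lemma hd_last_bin: "binary_word v \<Longrightarrow> v \<noteq> [] \<Longrightarrow> hd v \<in> {0,1} \<and> last v \<in> {0,1}"
  unfolding binary_word_def using hd_in_set last_in_set by blast

lemma parity:
  "pansiot_pre_antipal v \<Longrightarrow> length v = 2*k+1 \<Longrightarrow> (hd v = last v \<longleftrightarrow> even k)"
proof (induction k arbitrary: v)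
  case 0
  then obtain a where "v = [a]" by (cases v) auto
  then show ?case by simp
next
  case (Suc k)
  then obtain a v' where v: "v = a # v'" by (cases v) auto
  with Suc have "v' \<noteq> []" by auto
  then obtain w b where w: "v' = w @ [b]" by (metis append_butlast_last_id)
  with Suc v have wne: "w \<noteq> []" by auto
  with Suc v w have P: "a \<in> {0,1} \<and> b \<in> {0,1} \<and> pansiot_pre_antipal w \<and>
    (if a = hd w then 0 else 1::nat) \<noteq> (if last w = b then 0 else 1)"
    using ppa_wrap by metis
  with Suc.IH[of w] Suc.prems v w have IH: "hd w = last w \<longleftrightarrow> even k" by simp
  from P wne have "hd w \<in> {0,1} \<and> last w \<in> {0,1}"
    using hd_last_bin pansiot_pre_antipal_def by blast
  with P IH v w show ?case by auto
qed

lemma ppa3: "pansiot_pre_antipal [x,y,z] \<longleftrightarrow>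
   x \<in> {0,1} \<and> y \<in> {0,1} \<and> z \<in> {0,1} \<and> ((x = y) \<noteq> (y = z))"
proof -
  have "pansiot_pre_antipal [y] \<longleftrightarrow> y \<in> {0,1}"
    by (simp add: pansiot_pre_antipal_def binary_word_def anti_palindrome_def)
  then show ?thesis using ppa_wrap[of "[y]" x z] by auto
qed

lemma len3: "{u. pansiot_pre_antipal u \<and> length u = 3} = {[0,0,1], [0,1,1], [1,0,0], [1,1,0]}"
proof (rule set_eqI, rule iffI)
  fix u assume "u \<in> {u. pansiot_pre_antipal u \<and> length u = 3}"
  then have u: "pansiot_pre_antipal u" "length u = 3" by auto
  then obtain x y z where xyz: "u = [x,y,z]" by (auto simp: length_Suc_conv numeral_3_eq_3)
  with u ppa3 have "x \<in> {0,1}" "y \<in> {0,1}" "z \<in> {0,1}" "(x = y) \<noteq> (y = z)" by auto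
  then show "u \<in> {[0,0,1], [0,1,1], [1,0,0], [1,1,0]}" unfolding xyz
    by (elim insertE emptyE) auto
next
  fix u :: "nat list" assume "u \<in> {[0,0,1], [0,1,1], [1,0,0], [1,1,0]}"
  then show "u \<in> {u. pansiot_pre_antipal u \<and> length u = 3}"
    by (auto simp: ppa3)
qed

lemma split_wrap:
  assumes "length u = m + 3"
  obtains x v y where "u = x # v @ [y]" "length v = m + 1"
proof -
  obtain x u' where u: "u = x # u'" using assms by (cases u) auto
  then have "u' \<noteq> []" using assms by auto
  then obtain v y where "u' = v @ [y]" by (metis append_butlast_last_id)
  with u assms show ?thesis using that by auto
qed

lemma part1:
  assumes n: "n \<ge> (1::nat)"
  shows "{u. pansiot_pre_antipal u \<and> length u = 4*n+1}
            = {[a] @ v @ [a] | a v. a \<in> {0,1} \<and> pansiot_pre_antipal v \<and> length v = 4*n-1}"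
proof (rule set_eqI, rule iffI)
  fix u assume "u \<in> {u. pansiot_pre_antipal u \<and> length u = 4*n+1}"
  then have u: "pansiot_pre_antipal u" "length u = (4*n-2) + 3" using n by auto
  obtain x v y where xv: "u = x # v @ [y]" "length v = 4*n-2 + 1" using split_wrap[OF u(2)] by blast
  then have vne: "v \<noteq> []" by auto
  with u xv have P: "x \<in> {0,1} \<and> y \<in> {0,1} \<and> pansiot_pre_antipal v \<and>
    (if x = hd v then 0 else 1::nat) \<noteq> (if last v = y then 0 else 1)"
    using ppa_wrap by metis
  have "length v = 2*(2*n-1)+1" using xv n by auto
  from parity[OF _ this] P have "hd v \<noteq> last v" using n by auto
  moreover have "hd v \<in> {0,1} \<and> last v \<in> {0,1}"
    using hd_last_bin P vne pansiot_pre_antipal_def by blast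
  ultimately have "x = y" using P by auto
  then show "u \<in> {[a] @ v @ [a] | a v. a \<in> {0,1} \<and> pansiot_pre_antipal v \<and> length v = 4*n-1}"
    using P xv n by auto
next
  fix u assume "u \<in> {[a] @ v @ [a] | a v. a \<in> {0,1} \<and> pansiot_pre_antipal v \<and> length v = 4*n-1}"
  then obtain a v where av: "u = a # v @ [a]" "a \<in> {0,1}" "pansiot_pre_antipal v" "length v = 4*n-1"
    by auto
  then have vne: "v \<noteq> []" using n by auto
  have "length v = 2*(2*n-1)+1" using av n by auto
  from parity[OF av(3) this] have "hd v \<noteq> last v" using n by auto
  moreover have "hd v \<in> {0,1} \<and> last v \<in> {0,1}"
    using hd_last_bin av vne pansiot_pre_antipal_def by blast
  ultimately have "(if a = hd v then 0 else 1::nat) \<noteq> (if last v = a then 0 else 1)"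
    using av by auto
  then have "pansiot_pre_antipal u" using ppa_wrap[OF vne] av by simp
  then show "u \<in> {u. pansiot_pre_antipal u \<and> length u = 4*n+1}" using av n by auto
qed

lemma part2:
  assumes n: "n \<ge> (1::nat)"
  shows "{u. pansiot_pre_antipal u \<and> length u = 4*n+3}
            = {[a] @ v @ [1-a] | a v. a \<in> {0,1} \<and> pansiot_pre_antipal v \<and> length v = 4*n+1}"
proof (rule set_eqI, rule iffI)
  fix u assume "u \<in> {u. pansiot_pre_antipal u \<and> length u = 4*n+3}"
  then have u: "pansiot_pre_antipal u" "length u = 4*n + 3" using n by auto
  obtain x v y where xv: "u = x # v @ [y]" "length v = 4*n + 1" using split_wrap[OF u(2)] by blast
  then have vne: "v \<noteq> []" by auto
  with u xv have P: "x \<in> {0,1} \<and> y \<in> {0,1} \<and> pansiot_pre_antipal v \<and>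
    (if x = hd v then 0 else 1::nat) \<noteq> (if last v = y then 0 else 1)"
    using ppa_wrap by metis
  have "length v = 2*(2*n)+1" using xv n by auto
  from parity[OF _ this] P have "hd v = last v" using n by auto
  moreover have "hd v \<in> {0,1} \<and> last v \<in> {0,1}"
    using hd_last_bin P vne pansiot_pre_antipal_def by blast
  ultimately have "y = 1 - x" using P by (elim conjE insertE emptyE; simp)
  then show "u \<in> {[a] @ v @ [1-a] | a v. a \<in> {0,1} \<and> pansiot_pre_antipal v \<and> length v = 4*n+1}"
    using P xv n by auto
next
  fix u assume "u \<in> {[a] @ v @ [1-a] | a v. a \<in> {0,1} \<and> pansiot_pre_antipal v \<and> length v = 4*n+1}"
  then obtain a v where av: "u = a # v @ [1-a]" "a \<in> {0,1}" "pansiot_pre_antipal v" "length v = 4*n+1"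
    by auto
  then have vne: "v \<noteq> []" using n by auto
  have "length v = 2*(2*n)+1" using av n by auto
  from parity[OF av(3) this] have "hd v = last v" using n by auto
  moreover have "hd v \<in> {0,1} \<and> last v \<in> {0,1}"
    using hd_last_bin av vne pansiot_pre_antipal_def by blast
  ultimately have "(if a = hd v then 0 else 1::nat) \<noteq> (if last v = 1-a then 0 else 1)"
    using av(2) by (elim conjE insertE emptyE; simp)
  moreover have "1 - a \<in> {0,1}" by auto
  ultimately have "pansiot_pre_antipal u" using ppa_wrap[OF vne] av by simp
  then show "u \<in> {u. pansiot_pre_antipal u \<and> length u = 4*n+3}" using av n by simp
qed

theorem mainTheorem2:
  shows "{u. pansiot_pre_antipal u \<and> length u = 3} = {[0,0,1], [0,1,1], [1,0,0], [1,1,0]}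
    \<and> (\<forall>n::nat. n \<ge> 1 \<longrightarrow>
          {u. pansiot_pre_antipal u \<and> length u = 4*n+1}
            = {[a] @ v @ [a] | a v. a \<in> {0,1} \<and> pansiot_pre_antipal v \<and> length v = 4*n-1}
        \<and> {u. pansiot_pre_antipal u \<and> length u = 4*n+3}
            = {[a] @ v @ [1-a] | a v. a \<in> {0,1} \<and> pansiot_pre_antipal v \<and> length v = 4*n+1})"
  using len3 part1 part2 by (intro conjI allI impI) auto

end
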